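(* Let $\Sigma$ be a system as in the context and let $O=\mathcal{O}bs_n(A,C)$. Then the relation $\ker([O\ \ -O])\subseteq\mathbb R^n\times\mathbb R^n$ is total, satisfies conditions $(h_0)$–$(h_4)$ below with $R_1=R_2=O$, and has maximal dimension among all total relations $\mathcal R=\ker([R_1\ \ -R_2])\subseteq\mathbb R^n\times\mathbb R^n$ ($R_1,R_2$ real matrices with $n$ columns and the same number of rows) satisfying: $(h_0)$ $\mathrm{diag}(A,A)\mathcal R\subseteq\mathcal R$; $(h_1)$ $R_1B=R_2B$; $(h_2)$ $R_1G\mu=R_2G\mu$; $(h_3)$ $R_1GG^TR_1^T=R_2GG^TR_2^T$; $(h_4)$ $\mathcal R\subseteq\ker([C\ \ -C])$.
   Context: $\Sigma$: $x(t+1)=Ax(t)+Bu(t)+Gw(t)$, $y(t)=Cx(t)+\nu(t)$, $t\in\mathbb N$, $x\in\mathbb R^n$, $u\in\mathbb R^m$, $w\in\mathbb R^l$, $y,\nu\in\mathbb R^p$, where $(w(t))_t$ is i.i.d. $\mathcal N(\mu,I_l)$ and $(\nu(t))_t$ is i.i.d. $\mathcal N(0,\Psi)$. $\mathcal{O}bs_n(A,C)$ is the matrix obtained by stacking $C,CA,\dots,CA^{n-1}$ vertically. A relation $\mathcal R\subseteq\mathbb R^n\times\mathbb R^n$ is total if every $x$ is a first component and every $x'$ a second component of some pair in $\mathcal R$. *)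

theory Defs
  imports "HOL-Analysis.Analysis"
begin

text \<open>Matrix power (note: the ring structure on vec is componentwise, so we
define the matrix power via the matrix product explicitly).\<close>
definition matpow :: "real^'n^'n \<Rightarrow> nat \<Rightarrow> real^'n^'n" where
  "matpow A k = (((**) A) ^^ k) (mat 1)"

definition idx :: "'n::finite \<Rightarrow> nat" where
  "idx = (SOME f. bij_betw f (UNIV::'n set) {..<CARD('n)})"

text \<open>Observability matrix Obs_n(A,C): the blocks C, CA, ..., CA^(n-1) stacked
vertically, n = CARD('n); row (i,j) is row i of C A^(idx j).\<close>
definition Obs :: "real^'n^'n \<Rightarrow> real^'n^'p \<Rightarrow> real^'n^('p \<times> 'n)" where
  "Obs A C = (\<chi> ij. (C ** matpow A (idx (snd ij))) $ fst ij)"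

definition kerrel :: "real^'n^'k \<Rightarrow> real^'n^'k \<Rightarrow> ((real^'n) \<times> (real^'n)) set" where
  "kerrel R1 R2 = {(x, y). R1 *v x - R2 *v y = 0}"

definition total_rel :: "('a \<times> 'a) set \<Rightarrow> bool" where
  "total_rel R \<longleftrightarrow> (\<forall>x. \<exists>y. (x, y) \<in> R) \<and> (\<forall>y. \<exists>x. (x, y) \<in> R)"

definition conds :: "real^'n^'n \<Rightarrow> real^'m^'n \<Rightarrow> real^'l^'n \<Rightarrow> real^'l \<Rightarrow> real^'n^'p
    \<Rightarrow> real^'n^'k \<Rightarrow> real^'n^'k \<Rightarrow> bool" where
  "conds A B G \<mu> C R1 R2 \<longleftrightarrow>
     (\<forall>(x, y) \<in> kerrel R1 R2. (A *v x, A *v y) \<in> kerrel R1 R2) \<and>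
     R1 ** B = R2 ** B \<and>
     R1 *v (G *v \<mu>) = R2 *v (G *v \<mu>) \<and>
     R1 ** G ** transpose G ** transpose R1 = R2 ** G ** transpose G ** transpose R2 \<and>
     kerrel R1 R2 \<subseteq> kerrel C C"

end

theory Submission
  imports Defs
begin

lemma matpow_Suc: "matpow A (Suc j) = A ** matpow A j"
  by (simp add: matpow_def)

lemma matpow_Suc': "matpow A (Suc j) = matpow A j ** A"
proof (induction j)
  case 0 then show ?case by (simp add: matpow_def)
next
  case (Suc j)
  have "matpow A (Suc (Suc j)) = A ** (matpow A j ** A)" using Suc by (simp add: matpow_Suc)
  also have "\<dots> = matpow A (Suc j) ** A" by (simp add: matrix_mul_assoc matpow_Suc)
  finally show ?case .
qed

definition NS :: "real^'n^'n \<Rightarrow> real^'n^'p \<Rightarrow> nat \<Rightarrow> (real^'n) set" where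
  "NS A C k = {z. \<forall>j<k. C *v (matpow A j *v z) = 0}"

lemma NS_subspace: "subspace (NS A C k)"
  unfolding subspace_def NS_def
  by (simp add: matrix_vector_right_distrib matrix_vector_mult_scaleR)

lemma NS_Suc: "NS A C (Suc k) = {z. C *v z = 0 \<and> A *v z \<in> NS A C k}"
proof -
  have "(\<forall>j<Suc k. C *v (matpow A j *v z) = 0) \<longleftrightarrow>
        (C *v z = 0 \<and> (\<forall>j<k. C *v (matpow A j *v (A *v z)) = 0))" for z
  proof -
    have e: "matpow A (Suc j) *v z = matpow A j *v (A *v z)" for j
      by (simp add: matpow_Suc' matrix_vector_mul_assoc)
    have s: "(\<forall>j<Suc k. C *v (matpow A j *v z) = 0) \<longleftrightarrow>
          (C *v (matpow A 0 *v z) = 0 \<and> (\<forall>j<k. C *v (matpow A (Suc j) *v z) = 0))"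
      by (auto simp: less_Suc_eq_0_disj)
    have m0: "matpow A 0 = mat 1" by (simp add: matpow_def)
    show ?thesis using s
      by (simp only: e m0 matrix_vector_mul_lid)
  qed
  then show ?thesis unfolding NS_def by auto
qed

lemma NS_mono: "NS A C (Suc k) \<subseteq> NS A C k"
  unfolding NS_def by auto

lemma NS_stable: "NS A C k = NS A C (Suc k) \<Longrightarrow> NS A C (m + k) = NS A C (Suc (m + k))"
proof (induction m)
  case 0 then show ?case by simp
next
  case (Suc m)
  then have "NS A C (m + k) = NS A C (Suc (m + k))" by simp
  have "NS A C (Suc (Suc (m + k))) = {z. C *v z = 0 \<and> A *v z \<in> NS A C (Suc (m + k))}"
    by (rule NS_Suc)
  also have "\<dots> = {z. C *v z = 0 \<and> A *v z \<in> NS A C (m + k)}"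
    using \<open>NS A C (m + k) = NS A C (Suc (m + k))\<close> by simp
  also have "\<dots> = NS A C (Suc (m + k))" by (rule NS_Suc[symmetric])
  finally show ?case by simp
qed

lemma NS_dim: "(\<forall>k\<le>K. NS A C (Suc k) \<noteq> NS A C k) \<Longrightarrow> k \<le> Suc K \<Longrightarrow>
   dim (NS A C k) + k \<le> CARD('n)" for A :: "real^'n^'n"
proof (induction k)
  case 0 then show ?case by (simp add: dim_subset_UNIV_cart)
next
  case (Suc k)
  have "NS A C (Suc k) \<subset> NS A C k" using Suc.prems NS_mono[of A C k] by auto
  then have "span (NS A C (Suc k)) \<subset> span (NS A C k)"
  proof -
    have sp: "span (NS A C m) = NS A C m" for m using NS_subspace[of A C m] by simp
    show ?thesis using \<open>NS A C (Suc k) \<subset> NS A C k\<close> by (simp only: sp)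
  qed
  then have "dim (NS A C (Suc k)) < dim (NS A C k)" by (rule dim_psubset)
  then show ?case using Suc by simp
qed

lemma NS_final: "NS A C (CARD('n)) = NS A C (Suc (CARD('n)))" for A :: "real^'n^'n"
proof -
  have "\<exists>k\<le>CARD('n). NS A C (Suc k) = NS A C k"
  proof (rule ccontr)
    assume "\<not> ?thesis"
    then have "dim (NS A C (Suc (CARD('n)))) + Suc (CARD('n)) \<le> CARD('n)"
      using NS_dim[of "CARD('n)" A C "Suc (CARD('n))"] by auto
    then show False by simp
  qed
  then obtain k where k: "k \<le> CARD('n)" "NS A C (Suc k) = NS A C k" by auto
  then show ?thesis using NS_stable[of A C k "CARD('n) - k"] by simp
qed

lemma idx_bij: "bij_betw (idx :: 'n::finite \<Rightarrow> nat) UNIV {..<CARD('n)}"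
proof -
  have "\<exists>f. bij_betw f (UNIV::'n set) {..<CARD('n)}"
    using ex_bij_betw_finite_nat[of "UNIV::'n set"] by (auto simp: atLeast0LessThan)
  then show ?thesis unfolding idx_def by (rule someI_ex)
qed

lemma Obs_apply: "(Obs A C *v x) $ (i, j) = (C *v (matpow A (idx j) *v x)) $ i"
proof -
  have "(Obs A C *v x) $ (i, j) = ((C ** matpow A (idx j)) *v x) $ i"
    by (simp add: Obs_def matrix_vector_mult_def)
  then show ?thesis by (simp add: matrix_vector_mul_assoc)
qed

lemma Obs_eq: "Obs A C *v x = Obs A C *v y \<longleftrightarrow>
   (\<forall>k<CARD('n). C *v (matpow A k *v x) = C *v (matpow A k *v y))"
  for A :: "real^'n^'n"
proof -
  have "Obs A C *v x = Obs A C *v y \<longleftrightarrow>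
     (\<forall>j::'n. C *v (matpow A (idx j) *v x) = C *v (matpow A (idx j) *v y))"
    by (auto simp: vec_eq_iff Obs_apply)
  also have "\<dots> \<longleftrightarrow> (\<forall>k<CARD('n). C *v (matpow A k *v x) = C *v (matpow A k *v y))"
  proof -
    have im: "range (idx::'n\<Rightarrow>nat) = {..<CARD('n)}"
      using idx_bij[where 'n='n] bij_betw_imp_surj_on by blast
    have "(\<forall>k<CARD('n). C *v (matpow A k *v x) = C *v (matpow A k *v y)) \<longleftrightarrow>
      (\<forall>k\<in>range (idx::'n\<Rightarrow>nat). C *v (matpow A k *v x) = C *v (matpow A k *v y))"
      unfolding im by blast
    then show ?thesis by simp
  qed
  finally show ?thesis .
qed

lemma Obs_NS: "Obs A C *v x = Obs A C *v y \<longleftrightarrow> x - y \<in> NS A C (CARD('n))"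
  for A :: "real^'n^'n"
  unfolding Obs_eq NS_def by (simp add: matrix_vector_mult_diff_distrib)

lemma iter_rel:
  assumes h0: "\<forall>(x, y) \<in> kerrel R1 R2. (A *v x, A *v y) \<in> kerrel R1 R2"
  and h4: "kerrel R1 R2 \<subseteq> kerrel C C"
  and xy: "(x, y) \<in> kerrel R1 R2"
  shows "C *v (matpow A k *v x) = C *v (matpow A k *v y)"
proof -
  have "(matpow A k *v x, matpow A k *v y) \<in> kerrel R1 R2" for k
  proof (induction k)
    case 0 then show ?case using xy by (simp add: matpow_def)
  next
    case (Suc k) then show ?case using h0
      by (auto simp: matpow_Suc matrix_vector_mul_assoc[symmetric])
  qed
  then show ?thesis using h4 unfolding kerrel_def by auto
qed

theorem theorem7:
  fixes A :: "real^'n^'n" and B :: "real^'m^'n" and G :: "real^'l^'n"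
    and \<mu> :: "real^'l" and C :: "real^'n^'p"
  shows "total_rel (kerrel (Obs A C) (Obs A C))
     \<and> conds A B G \<mu> C (Obs A C) (Obs A C)
     \<and> (\<forall>(R1 :: real^'n^'k) R2. total_rel (kerrel R1 R2) \<and> conds A B G \<mu> C R1 R2
          \<longrightarrow> dim (kerrel R1 R2) \<le> dim (kerrel (Obs A C) (Obs A C)))"
proof (intro conjI allI impI)
  show "total_rel (kerrel (Obs A C) (Obs A C))"
    unfolding total_rel_def kerrel_def by auto
  have k: "kerrel (Obs A C) (Obs A C) = {(x, y). x - y \<in> NS A C (CARD('n))}"
    unfolding kerrel_def using Obs_NS[of A C] by auto
  have h0: "\<forall>(x, y) \<in> kerrel (Obs A C) (Obs A C). (A *v x, A *v y) \<in> kerrel (Obs A C) (Obs A C)"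
  proof (clarsimp simp: k)
    fix x y assume "x - y \<in> NS A C (CARD('n))"
    then have "x - y \<in> NS A C (Suc (CARD('n)))" using NS_final[of A C] by simp
    then have "A *v (x - y) \<in> NS A C (CARD('n))" by (simp add: NS_Suc)
    then show "A *v x - A *v y \<in> NS A C (CARD('n))" by (simp add: matrix_vector_mult_diff_distrib)
  qed
  have h4: "kerrel (Obs A C) (Obs A C) \<subseteq> kerrel C C"
  proof (clarsimp simp: k)
    fix x y assume "x - y \<in> NS A C (CARD('n))"
    moreover have "0 < CARD('n)" by simp
    ultimately have "C *v (matpow A 0 *v (x - y)) = 0" unfolding NS_def by blast
    then show "(x, y) \<in> kerrel C C"
      by (simp add: kerrel_def matpow_def matrix_vector_mult_diff_distrib)
  qed
  show "conds A B G \<mu> C (Obs A C) (Obs A C)"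
    unfolding conds_def using h0 h4 by simp
  fix R1 :: "real^'n^'k" and R2
  assume "total_rel (kerrel R1 R2) \<and> conds A B G \<mu> C R1 R2"
  then have c0: "\<forall>(x, y) \<in> kerrel R1 R2. (A *v x, A *v y) \<in> kerrel R1 R2"
    and c4: "kerrel R1 R2 \<subseteq> kerrel C C" unfolding conds_def by auto
  have "kerrel R1 R2 \<subseteq> kerrel (Obs A C) (Obs A C)"
  proof clarify
    fix x y assume "(x, y) \<in> kerrel R1 R2"
    then have "\<forall>k<CARD('n). C *v (matpow A k *v x) = C *v (matpow A k *v y)"
      using iter_rel[OF c0 c4] by blast
    then show "(x, y) \<in> kerrel (Obs A C) (Obs A C)"
      unfolding kerrel_def using Obs_eq[of A C x y] by simp
  qed
  then show "dim (kerrel R1 R2) \<le> dim (kerrel (Obs A C) (Obs A C))"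
    by (rule dim_subset)
qed

end
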